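(* Let $L=dN$ with integers $d\ge2$, $N\ge1$, and let $0<|z|<r_0$. Then the set $\mathcal L_z$ can be partitioned into $N$ subsets $\mathcal L_z^{(i)}$, $1\le i\le N$, each of $d-1$ elements, such that there is a map $M:\mathcal L_z\to\mathcal R_z$ with $M(u)=M(u')$ whenever $u,u'$ lie in the same subset $\mathcal L_z^{(i)}$, and $v=M(u)$ satisfies $v(v+1)^{d-1}=u(u+1)^{d-1}$.
   Context: $\rho=N/L=1/d$, $r_0=\rho^\rho(1-\rho)^{1-\rho}$. For $0<|z|<r_0$, the roots of $w^N(w+1)^{L-N}=z^L$ are simple and none has real part $-\rho$; $\mathcal L_z$ is the set of roots with real part $<-\rho$ and $\mathcal R_z$ the set with real part $>-\rho$. *)

theory Defs
  imports "HOL-Analysis.Analysis"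
begin

text \<open>rho = N/L = 1/d and r0 = rho^rho (1-rho)^(1-rho).\<close>
definition rho :: "nat \<Rightarrow> real" where
  "rho d = 1 / real d"

definition r0 :: "nat \<Rightarrow> real" where
  "r0 d = rho d powr rho d * (1 - rho d) powr (1 - rho d)"

definition bethe_roots :: "nat \<Rightarrow> nat \<Rightarrow> complex \<Rightarrow> complex set" where
  "bethe_roots d N z = {w. w ^ N * (w + 1) ^ (d * N - N) = z ^ (d * N)}"

definition Lset :: "nat \<Rightarrow> nat \<Rightarrow> complex \<Rightarrow> complex set" where
  "Lset d N z = {w \<in> bethe_roots d N z. Re w < - rho d}"

definition Rset :: "nat \<Rightarrow> nat \<Rightarrow> complex \<Rightarrow> complex set" where
  "Rset d N z = {w \<in> bethe_roots d N z. Re w > - rho d}"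

end

theory Submission
  imports Defs "HOL-Computational_Algebra.Fundamental_Theorem_Algebra"
begin


lemma line_bound:
  fixes d :: nat and w :: complex
  assumes d: "d \<ge> 2" and re: "Re w = - (1 / real d)"
  shows "cmod (w * (w+1)^(d-1)) \<ge> (1 / real d) * (real (d-1) / real d)^(d-1)"
proof -
  have "cmod w \<ge> 1 / real d" using abs_Re_le_cmod[of w] re by simp
  moreover have "cmod (w+1) \<ge> real (d-1) / real d"
  proof -
    have "Re (w+1) = real (d-1) / real d" using re d by (simp add: of_nat_diff field_simps)
    then show ?thesis using abs_Re_le_cmod[of "w+1"] by simp
  qed
  ultimately have "(1 / real d) * (real (d-1) / real d)^(d-1) \<le> cmod w * cmod (w+1)^(d-1)"
    by (intro mult_mono power_mono) auto
  then show ?thesis by (simp add: norm_mult norm_power)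
qed

lemma right_root:
  fixes d :: nat and c :: complex
  assumes d: "d \<ge> 2" and cR: "cmod c < (1 / real d) * (real (d-1) / real d)^(d-1)"
  shows "\<exists>!v. Re v > - (1 / real d) \<and> v * (v+1)^(d-1) = c"
proof -
  define m where "m = d - 1"
  have m1: "m \<ge> 1" and dm: "real d = real m + 1" using d by (auto simp: m_def)
  define a where "a = 1 / real d"
  define b where "b = real m / real d"
  have a0: "a > 0" and b0: "b > 0" and ab: "a + b = 1" using d m1 dm
    by (auto simp: a_def b_def field_simps)
  define R where "R = a * b^m"
  have cR': "cmod c < R" using cR by (simp add: R_def a_def b_def m_def)
  have R0: "R > 0" using a0 b0 by (simp add: R_def)
  define g where "g w = c * inverse (w+1)^m" for w
  define S where "S = cball (0::complex) a"
  have near: "b \<le> cmod (w+1)" if "w \<in> S" for w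
  proof -
    have "1 = cmod ((w+1) - w)" by simp
    also have "\<dots> \<le> cmod (w+1) + cmod w" by (rule norm_triangle_ineq4)
    finally show ?thesis using that ab by (simp add: S_def)
  qed
  have maps: "g ` S \<subseteq> S"
  proof
    fix y assume "y \<in> g ` S"
    then obtain w where w: "w \<in> S" "y = g w" by auto
    have bw: "b^m \<le> cmod (w+1) ^ m" using near[OF w(1)] b0 by (simp add: power_mono)
    have "cmod y = cmod c / cmod (w+1)^m" using w by (simp add: g_def norm_mult norm_power norm_inverse divide_inverse power_inverse)
    also have "\<dots> \<le> cmod c / b^m" using bw b0 by (simp add: frac_le)
    also have "\<dots> < a" using cR' b0 by (simp add: R_def divide_less_eq)
    finally show "y \<in> S" by (simp add: S_def)
  qed
  define k where "k = cmod c / R"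
  have k: "0 \<le> k" "k < 1" using cR' R0 by (auto simp: k_def)
  have lip: "dist (g x) (g y) \<le> k * dist x y" if "x \<in> S" "y \<in> S" for x y
  proof -
    have "cmod (g x - g y) \<le> k * cmod (x - y)"
    proof (rule field_differentiable_bound[of S g "\<lambda>w. - (c * of_nat m * inverse (w+1)^(m+1))"])
      show "convex S" by (simp add: S_def)
      show "(g has_field_derivative - (c * of_nat m * inverse (w+1)^(m+1))) (at w within S)" if "w \<in> S" for w
      proof -
        have nz: "w + 1 \<noteq> 0" using near[OF that] b0 by auto
        show ?thesis unfolding g_def
          apply (rule has_field_derivative_at_within)
          apply (rule derivative_eq_intros refl)+
          apply (rule nz, rule refl, rule refl)
          using m1 by (cases m) (simp_all add: algebra_simps)
      qed
      show "cmod (- (c * of_nat m * inverse (w+1)^(m+1))) \<le> k" if "w \<in> S" for w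
      proof -
        have bw: "b^(m+1) \<le> cmod (w+1) ^ (m+1)" using near[OF that] b0 by (intro power_mono) auto
        have "cmod (- (c * of_nat m * inverse (w+1)^(m+1))) = cmod c * m / cmod (w+1)^(m+1)"
          by (simp add: norm_mult norm_power norm_inverse divide_inverse power_inverse)
        also have "\<dots> \<le> cmod c * m / b^(m+1)" using bw b0 by (simp add: frac_le)
        also have "\<dots> = k" using m1 dm b0 a0
          by (simp add: k_def R_def a_def b_def field_simps)
        finally show ?thesis .
      qed
    qed (use that in auto)
    then show ?thesis by (simp add: dist_norm)
  qed
  have "\<exists>!x\<in>S. g x = x"
    by (rule Banach_fix[OF _ _ k maps lip]) (use a0 in \<open>auto simp: S_def compact_imp_complete\<close>)
  then obtain x where x: "x \<in> S" "g x = x" and xu: "\<And>y. y \<in> S \<Longrightarrow> g y = y \<Longrightarrow> y = x" by blast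
  have fix_iff: "g w = w \<longleftrightarrow> w * (w+1)^m = c" if "w + 1 \<noteq> 0" for w
    using that by (auto simp: g_def field_simps)
  have "x + 1 \<noteq> 0" using near[OF x(1)] b0 by auto
  then have xroot: "x * (x+1)^m = c" using fix_iff x(2) by blast
  have xre: "Re x \<ge> -a" using x(1) abs_Re_le_cmod[of x] by (auto simp: S_def)
  have "Re x \<noteq> -a"
  proof
    assume "Re x = -a"
    then have "cmod (x * (x+1)^(d-1)) \<ge> R" using line_bound[OF d, of x]
      by (simp add: R_def a_def b_def m_def)
    then show False using xroot cR' by (simp add: m_def)
  qed
  with xre have xre': "Re x > -a" by simp
  show ?thesis
  proof (rule ex1I[of _ x])
    show "- (1 / real d) < Re x \<and> x * (x + 1) ^ (d - 1) = c" using xre' xroot by (simp add: a_def m_def)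
  next
    fix v assume v: "- (1 / real d) < Re v \<and> v * (v + 1) ^ (d - 1) = c"
    have vb: "cmod (v+1) > b"
    proof -
      have "Re (v+1) > b" using v ab by (simp add: a_def)
      then show ?thesis using abs_Re_le_cmod[of "v+1"] by simp
    qed
    have "b^m \<le> cmod (v+1)^m" using vb b0 by (simp add: power_mono less_imp_le)
    have "cmod v * cmod (v+1)^m = cmod c" using v unfolding m_def by (metis norm_mult norm_power)
    then have "cmod v * b^m \<le> cmod c" using \<open>b^m \<le> cmod (v+1)^m\<close>
      by (metis mult_left_mono norm_ge_zero order_trans)
    then have "cmod v * b^m < a * b^m" using cR' by (simp add: R_def)
    then have "cmod v < a" using b0 by simp
    then have vS: "v \<in> S" by (simp add: S_def)
    have "v + 1 \<noteq> 0" using vb b0 by auto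
    then have "g v = v" using fix_iff[of v] v by (simp add: m_def)
    then show "v = x" using xu vS by blast
  qed
qed

lemma root_count:
  fixes d :: nat and c :: complex
  assumes d: "d \<ge> 2" and c0: "c \<noteq> 0" and cR: "cmod c < (1 / real d) * (real (d-1) / real d)^(d-1)"
  shows "finite {w. w * (w+1)^(d-1) = c} \<and> card {w. w * (w+1)^(d-1) = c} = d"
proof -
  obtain k where k: "d = Suc (Suc k)" using d by (metis add_2_eq_Suc le_iff_add)
  define p :: "complex poly" where "p = [:0,1:] * [:1,1:]^(d-1) + [:-c:]"
  have pp: "poly p w = w*(w+1)^(d-1) - c" for w by (simp add: p_def add.commute)
  have "degree ([:0,1:] * [:1,1:]^(d-1) :: complex poly) = d"
    using d by (subst degree_mult_eq) (auto simp: degree_power_eq)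
  then have deg: "degree p = d" unfolding p_def using d by (subst degree_add_eq_left) auto
  then have p0: "p \<noteq> 0" using d by auto
  have der: "poly (pderiv p) w = (w+1)^k * (of_nat d * w + 1)" for w
  proof -
    have "poly p = (\<lambda>w. w*(w+1)^(Suc k) - c)" using pp k by (auto simp: fun_eq_iff)
    then have d1: "((\<lambda>w. w*(w+1)^(Suc k) - c) has_field_derivative poly (pderiv p) w) (at w)"
      by (metis poly_DERIV)
    have d2: "((\<lambda>w. w*(w+1)^(Suc k) - c) has_field_derivative (w+1)^k * (of_nat d * w + 1)) (at w)"
      apply (rule derivative_eq_intros refl)+
      using k by (simp add: algebra_simps)
    show ?thesis using DERIV_unique[OF d1 d2] .
  qed
  have rsq: "rsquarefree p"
    unfolding rsquarefree_roots
  proof (intro allI notI)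
    fix a assume h: "poly p a = 0 \<and> poly (pderiv p) a = 0"
    then have "(a+1)^k = 0 \<or> of_nat d * a + 1 = 0" using der[of a] by simp
    then show False
    proof
      assume "(a+1)^k = 0"
      then have "a = -1" by (simp add: add_eq_0_iff2)
      then show False using h pp[of a] c0 d by (simp add: power_0_left)
    next
      assume "of_nat d * a + 1 = 0"
      then have "a = - 1 / of_nat d" using d by (simp add: field_simps add_eq_0_iff2 minus_equation_iff[of "a * _"])
      then have "Re a = - (1 / real d)" by simp
      from line_bound[OF d this] show False using h pp[of a] cR by simp
    qed
  qed
  have fin: "finite {z. poly p z = 0}" using p0 by (rule poly_roots_finite)
  have "d = degree (smult (lead_coeff p) (\<Prod>z|poly p z = 0. [:-z, 1:]))"
    using complex_poly_decompose_rsquarefree[OF rsq] deg by simp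
  also have "\<dots> = degree (\<Prod>z|poly p z = 0. [:-z, 1:])" using p0 by simp
  also have "\<dots> = (\<Sum>z|poly p z = 0. degree [:-z, 1:])" by (rule degree_prod_sum_eq) auto
  also have "\<dots> = card {z. poly p z = 0}" by simp
  finally have "card {z. poly p z = 0} = d" by simp
  moreover have "{z. poly p z = 0} = {w. w * (w+1)^(d-1) = c}" using pp by auto
  ultimately show ?thesis using fin by simp
qed

lemma left_count:
  fixes d :: nat and c :: complex
  assumes d: "d \<ge> 2" and c0: "c \<noteq> 0" and cR: "cmod c < (1 / real d) * (real (d-1) / real d)^(d-1)"
  shows "finite {w. w * (w+1)^(d-1) = c \<and> Re w < - (1 / real d)} \<and>
         card {w. w * (w+1)^(d-1) = c \<and> Re w < - (1 / real d)} = d - 1"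
proof -
  obtain v where v: "Re v > - (1 / real d) \<and> v * (v+1)^(d-1) = c"
    and vu: "\<And>u. Re u > - (1 / real d) \<and> u * (u+1)^(d-1) = c \<Longrightarrow> u = v"
    using right_root[OF d cR] by metis
  have nl: "Re w \<noteq> - (1 / real d)" if "w * (w+1)^(d-1) = c" for w
    using line_bound[OF d, of w] that cR by auto
  have eq: "{w. w * (w+1)^(d-1) = c} = insert v {w. w * (w+1)^(d-1) = c \<and> Re w < - (1 / real d)}"
  proof (rule set_eqI, rule iffI)
    fix w assume "w \<in> {w. w * (w+1)^(d-1) = c}"
    then have w: "w * (w+1)^(d-1) = c" by simp
    show "w \<in> insert v {w. w * (w+1)^(d-1) = c \<and> Re w < - (1 / real d)}"
    proof (cases "Re w < - (1 / real d)")
      case False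
      then have "Re w > - (1 / real d)" using nl[OF w] by linarith
      then show ?thesis using vu w by blast
    qed (use w in simp)
  qed (use v in auto)
  have vn: "v \<notin> {w. w * (w+1)^(d-1) = c \<and> Re w < - (1 / real d)}" using v by auto
  have fc: "finite {w. w * (w+1)^(d-1) = c} \<and> card {w. w * (w+1)^(d-1) = c} = d"
    by (rule root_count[OF d c0 cR])
  then have f2: "finite {w. w * (w+1)^(d-1) = c \<and> Re w < - (1 / real d)}" by (simp add: eq)
  from fc have "card (insert v {w. w * (w+1)^(d-1) = c \<and> Re w < - (1 / real d)}) = d" by (simp only: eq)
  then show ?thesis using f2 vn by simp
qed



theorem lemma10p1:
  fixes d N :: nat and z :: complex
  assumes "d \<ge> 2" and "N \<ge> 1"
    and "0 < cmod z" and "cmod z < r0 d"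
  shows "\<exists>(P :: nat \<Rightarrow> complex set) (M :: complex \<Rightarrow> complex).
           (\<Union>i\<in>{1..N}. P i) = Lset d N z
         \<and> (\<forall>i\<in>{1..N}. \<forall>j\<in>{1..N}. i \<noteq> j \<longrightarrow> P i \<inter> P j = {})
         \<and> (\<forall>i\<in>{1..N}. finite (P i) \<and> card (P i) = d - 1)
         \<and> (\<forall>u\<in>Lset d N z. M u \<in> Rset d N z)
         \<and> (\<forall>i\<in>{1..N}. \<forall>u\<in>P i. \<forall>u'\<in>P i. M u = M u')
         \<and> (\<forall>u\<in>Lset d N z. M u * (M u + 1) ^ (d - 1) = u * (u + 1) ^ (d - 1))"
  proof -
  define a where "a = 1 / real d"
  define R where "R = (1 / real d) * (real (d-1) / real d)^(d-1)"
  have d0: "real d > 0" using assms(1) by simp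
  have rho: "rho d = a" by (simp add: rho_def a_def)
  have rd: "r0 d ^ d = R"
  proof -
    have a0: "a > 0" and a1: "1 - a > 0" using assms(1) by (auto simp: a_def field_simps)
    have "r0 d ^ d = (a powr a) ^ d * ((1-a) powr (1-a)) ^ d"
      by (simp add: r0_def rho power_mult_distrib)
    also have "(a powr a) ^ d = a powr (real d * a)" using a0 by (simp add: powr_power)
    also have "real d * a = 1" using d0 by (simp add: a_def)
    also have "((1-a) powr (1-a)) ^ d = (1-a) powr (real d * (1-a))" using a1 by (simp add: powr_power)
    also have "real d * (1-a) = real (d-1)" using d0 assms(1) by (simp add: a_def field_simps of_nat_diff)
    also have "(1-a) powr real (d-1) = (1-a)^(d-1)" using a1 by (simp add: powr_realpow)
    also have "1 - a = real (d-1) / real d" using d0 assms(1) by (simp add: a_def field_simps of_nat_diff)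
    finally show ?thesis using a0 by (simp add: R_def a_def)
  qed
  have zR: "cmod z ^ d < R"
    using rd power_strict_mono[OF assms(4) _, of d] assms(1,3) by simp
  define f where "f w = w * (w+1)^(d-1)" for w :: complex
  define om where "om i = cis (2*pi*real (i-1)/real N)" for i :: nat
  have bij: "bij_betw (\<lambda>k. cis (2*pi*real k/real N)) {..<N} {x. x^N = 1}"
    by (rule Complex.bij_betw_roots_unity) (use assms(2) in simp)
  have om1: "om i ^ N = 1" if "i \<in> {1..N}" for i
    using bij_betw_apply[OF bij, of "i-1"] that by (auto simp: om_def)
  have ominj: "i = j" if "i \<in> {1..N}" "j \<in> {1..N}" "om i = om j" for i j
  proof -
    have "i - 1 = j - 1"
      using bij_betw_imp_inj_on[OF bij] that unfolding inj_on_def om_def by auto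
    then show ?thesis using that by auto
  qed
  have omsurj: "\<exists>i\<in>{1..N}. x = om i" if "x^N = 1" for x
  proof -
    from that bij obtain k where k: "k < N" "x = cis (2*pi*real k/real N)"
      unfolding bij_betw_def by auto
    show ?thesis by (rule bexI[of _ "k+1"]) (use k in \<open>auto simp: om_def\<close>)
  qed
  have omn: "cmod (om i) = 1" for i by (simp add: om_def)
  have zd0: "z^d \<noteq> 0" using assms(3) by auto
  have bethe: "w \<in> bethe_roots d N z \<longleftrightarrow> f w ^ N = (z^d)^N" for w
  proof -
    have "(d-1)*N = d*N - N" by (simp add: diff_mult_distrib)
    then have "f w ^ N = w^N * (w+1)^(d*N - N)"
      by (simp add: f_def power_mult_distrib power_mult[symmetric])
    moreover have "(z^d)^N = z^(d*N)" by (simp add: power_mult)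
    ultimately show ?thesis by (simp add: bethe_roots_def)
  qed
  have bethe2: "f w ^ N = (z^d)^N \<longleftrightarrow> (\<exists>i\<in>{1..N}. f w = om i * z^d)" for w
  proof
    assume "f w ^ N = (z^d)^N"
    then have "(f w / z^d)^N = 1" using zd0 by (simp add: power_divide)
    then obtain i where "i \<in> {1..N}" "f w / z^d = om i" using omsurj by blast
    then show "\<exists>i\<in>{1..N}. f w = om i * z^d" using zd0 by (auto simp: field_simps)
  next
    assume "\<exists>i\<in>{1..N}. f w = om i * z^d"
    then obtain i where "i \<in> {1..N}" "f w = om i * z^d" by blast
    then show "f w ^ N = (z^d)^N" using om1 by (simp add: power_mult_distrib)
  qed
  have cnorm: "cmod (om i * z^d) = cmod z ^ d" for i by (simp add: norm_mult norm_power omn)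
  have c0: "om i * z^d \<noteq> 0" for i using zd0 by (simp add: om_def)
  define P where "P i = {w. f w = om i * z^d \<and> Re w < - a}" for i
  have Lchar: "Lset d N z = {w. (\<exists>i\<in>{1..N}. f w = om i * z^d) \<and> Re w < -a}"
  proof (rule set_eqI)
    fix w show "w \<in> Lset d N z \<longleftrightarrow> w \<in> {w. (\<exists>i\<in>{1..N}. f w = om i * z^d) \<and> Re w < -a}"
      unfolding Lset_def rho mem_Collect_eq bethe bethe2 by (rule refl)
  qed
  have Rchar: "w \<in> Rset d N z \<longleftrightarrow> (\<exists>i\<in>{1..N}. f w = om i * z^d) \<and> Re w > -a" for w
    unfolding Rset_def rho mem_Collect_eq bethe bethe2 by (rule refl)
  define M where "M u = (THE v. Re v > -a \<and> f v = f u)" for u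
  have Mp: "Re (M u) > -a \<and> f (M u) = f u" if "u \<in> Lset d N z" for u
  proof -
    from that obtain i where i: "i \<in> {1..N}" "f u = om i * z^d" unfolding Lchar by blast
    have "cmod (f u) < R" using i zR cnorm by simp
    then have "\<exists>!v. Re v > -a \<and> f v = f u"
      using right_root[OF assms(1), of "f u"] by (simp add: R_def a_def f_def)
    then show ?thesis unfolding M_def by (rule theI')
  qed
  show ?thesis
  proof (intro exI[of _ P] exI[of _ M] conjI ballI impI)
    show "(\<Union>i\<in>{1..N}. P i) = Lset d N z"
    proof (rule set_eqI)
      fix w show "w \<in> (\<Union>i\<in>{1..N}. P i) \<longleftrightarrow> w \<in> Lset d N z"
        unfolding Lchar P_def UN_iff mem_Collect_eq by blast
    qed
  next
    fix i j assume "i \<in> {1..N}" "j \<in> {1..N}" "i \<noteq> j"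
    then show "P i \<inter> P j = {}"
    proof (intro equals0I)
      fix w assume ij: "i \<in> {1..N}" "j \<in> {1..N}" "i \<noteq> j" and w: "w \<in> P i \<inter> P j"
      have h1: "f w = om i * z^d" using w unfolding P_def by blast
      have h2: "f w = om j * z^d" using w unfolding P_def by blast
      from h1 h2 have "om i * z^d = om j * z^d" by (rule subst)
      then have "om i = om j" using zd0 mult_cancel_right by blast
      then show False using ominj ij by blast
    qed
  next
    fix i assume "i \<in> {1..N}"
    have "cmod (om i * z^d) < (1 / real d) * (real (d-1) / real d)^(d-1)"
      using zR cnorm by (simp add: R_def)
    from left_count[OF assms(1) c0 this]
    show "finite (P i)" "card (P i) = d - 1" by (simp_all add: P_def f_def a_def)
  next
    fix u assume u: "u \<in> Lset d N z"
    then obtain i where i: "i \<in> {1..N}" "f u = om i * z^d" unfolding Lchar by blast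
    show "M u \<in> Rset d N z" unfolding Rchar using Mp[OF u] i by auto
  next
    fix i u u' assume "i \<in> {1..N}" "u \<in> P i" "u' \<in> P i"
    then have "f u = f u'" by (simp add: P_def)
    then show "M u = M u'" by (simp add: M_def)
  next
    fix u assume u: "u \<in> Lset d N z"
    show "M u * (M u + 1) ^ (d - 1) = u * (u + 1) ^ (d - 1)" using Mp[OF u] by (simp add: f_def)
  qed
qed

end
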